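(* Let $n \ge 2$ and let $\mathcal{A}$ be a non-degenerate deformation of the type $A_{n-1}$ Coxeter arrangement in $\mathbb{R}^n$. Let $H_0 \in \mathcal{A}$, say $H_0 : x_k - x_l = a$ with $k<l$. Then the restriction $\mathcal{A}^{H_0}$, viewed in $\mathbb{R}^{n-1}$ via the isomorphism $H_0 \to \mathbb{R}^{n-1}$ that deletes the coordinate $x_l$, is a non-degenerate deformation of the type $A_{n-2}$ Coxeter arrangement in $\mathbb{R}^{n-1}$.
   Context: A non-degenerate deformation of the type $A_{n-1}$ Coxeter arrangement in $\mathbb{R}^n$ is a finite hyperplane arrangement of the form $\{x_i-x_j = a_{ij}^{(1)},\ldots,a_{ij}^{(t_{ij})}\ |\ 1\le i \ne j \le n\}$ with all $a_{ij}^{(s)}\in\mathbb{R}$ and $t_{ij}\ge 1$, i.e. every hyperplane is parallel to some $x_i-x_j=0$ and for every pair $i\ne j$ there is at least one hyperplane of the form $x_i - x_j = c$. For $H_0 \in \mathcal{A}$, the restriction is the arrangement $\mathcal{A}^{H_0} = \{H_0 \cap H : H \in \mathcal{A}\setminus\{H_0\},\ H_0\cap H \neq \emptyset\}$ in the affine space $H_0$. *)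

theory Defs
  imports Complex_Main
begin

text \<open>Points of R^n are modelled as functions nat => real vanishing at all
 indices >= n (coordinates are indexed 0..n-1 instead of 1..n).\<close>

definition Rn :: "nat \<Rightarrow> (nat \<Rightarrow> real) set" where
  "Rn n = {x. \<forall>i\<ge>n. x i = 0}"

definition hyp :: "nat \<Rightarrow> nat \<Rightarrow> nat \<Rightarrow> real \<Rightarrow> (nat \<Rightarrow> real) set" where
  "hyp n i j c = {x \<in> Rn n. x i - x j = c}"

definition nondeg_deformation :: "nat \<Rightarrow> (nat \<Rightarrow> real) set set \<Rightarrow> bool" where
  "nondeg_deformation n A \<longleftrightarrow>
     finite A \<and>
     (\<forall>H\<in>A. \<exists>i j c. i < n \<and> j < n \<and> i \<noteq> j \<and> H = hyp n i j c) \<and>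
     (\<forall>i j. i < n \<longrightarrow> j < n \<longrightarrow> i \<noteq> j \<longrightarrow> (\<exists>c. hyp n i j c \<in> A))"

definition restriction :: "'a set set \<Rightarrow> 'a set \<Rightarrow> 'a set set" where
  "restriction A H0 = {H0 \<inter> H | H. H \<in> A - {H0} \<and> H0 \<inter> H \<noteq> {}}"

definition del_coord :: "nat \<Rightarrow> (nat \<Rightarrow> real) \<Rightarrow> (nat \<Rightarrow> real)" where
  "del_coord l x = (\<lambda>i. if i < l then x i else x (Suc i))"

end

theory Submission
  imports Defs
begin

definition sg :: "nat \<Rightarrow> nat \<Rightarrow> nat \<Rightarrow> nat" where
  "sg k l m = (if m < l then m else if m = l then k else m - 1)"

definition lft :: "nat \<Rightarrow> nat \<Rightarrow> real \<Rightarrow> (nat \<Rightarrow> real) \<Rightarrow> (nat \<Rightarrow> real)" where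
  "lft k l a y = (\<lambda>m. if m < l then y m else if m = l then y k - a else y (m - 1))"

lemma del_lft: "k < l \<Longrightarrow> del_coord l (lft k l a y) = y"
  by (rule ext) (auto simp: del_coord_def lft_def)

lemma lft_in: "k < l \<Longrightarrow> l < n \<Longrightarrow> y \<in> Rn (n - 1) \<Longrightarrow> lft k l a y \<in> hyp n k l a"
  by (auto simp: Rn_def hyp_def lft_def)

lemma del_Rn: "l < n \<Longrightarrow> x \<in> Rn n \<Longrightarrow> del_coord l x \<in> Rn (n - 1)"
  by (auto simp: Rn_def del_coord_def)

lemma x_via_del: "k < l \<Longrightarrow> x \<in> hyp n k l a \<Longrightarrow>
   x m = del_coord l x (sg k l m) - (if m = l then a else 0)"
  by (auto simp: hyp_def sg_def del_coord_def)

lemma sg_lt: "k < l \<Longrightarrow> l < n \<Longrightarrow> m < n \<Longrightarrow> sg k l m < n - 1"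
  by (auto simp: sg_def)

lemma lft_sg: "k < l \<Longrightarrow> lft k l a y m = y (sg k l m) - (if m = l then a else 0)"
  by (auto simp: sg_def lft_def)

lemma keyA:
  assumes "k < l" "l < n" "i < n" "j < n" "sg k l i \<noteq> sg k l j"
  shows "del_coord l ` (hyp n k l a \<inter> hyp n i j c) =
     hyp (n - 1) (sg k l i) (sg k l j) (c + (if i = l then a else 0) - (if j = l then a else 0))"
proof
  show "del_coord l ` (hyp n k l a \<inter> hyp n i j c) \<subseteq> hyp (n - 1) (sg k l i) (sg k l j) (c + (if i = l then a else 0) - (if j = l then a else 0))"
  proof
    fix y assume "y \<in> del_coord l ` (hyp n k l a \<inter> hyp n i j c)"
    then obtain x where x: "x \<in> hyp n k l a" "x \<in> hyp n i j c" and y: "y = del_coord l x" by auto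
    have "y \<in> Rn (n - 1)" using del_Rn[OF assms(2)] x y by (auto simp: hyp_def)
    moreover have "x i - x j = c" using x by (auto simp: hyp_def)
    ultimately show "y \<in> hyp (n - 1) (sg k l i) (sg k l j) (c + (if i = l then a else 0) - (if j = l then a else 0))"
      using x_via_del[OF assms(1) x(1), of i] x_via_del[OF assms(1) x(1), of j] y
      by (auto simp: hyp_def split: if_splits)
  qed
next
  show "hyp (n - 1) (sg k l i) (sg k l j) (c + (if i = l then a else 0) - (if j = l then a else 0)) \<subseteq> del_coord l ` (hyp n k l a \<inter> hyp n i j c)"
  proof
    fix y assume y: "y \<in> hyp (n - 1) (sg k l i) (sg k l j) (c + (if i = l then a else 0) - (if j = l then a else 0))"
    have yR: "y \<in> Rn (n - 1)" using y by (auto simp: hyp_def)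
    have "lft k l a y \<in> hyp n k l a" using lft_in[OF assms(1,2) yR] .
    moreover have "lft k l a y \<in> hyp n i j c"
      using y calculation lft_sg[OF assms(1), of a y i] lft_sg[OF assms(1), of a y j]
      by (auto simp: hyp_def split: if_splits)
    ultimately show "y \<in> del_coord l ` (hyp n k l a \<inter> hyp n i j c)"
      using del_lft[OF assms(1)] by (metis IntI image_eqI)
  qed
qed

lemma degen:
  assumes "k < l" "l < n" "i < n" "j < n" "i \<noteq> j" "sg k l i = sg k l j"
    "hyp n k l a \<inter> hyp n i j c \<noteq> {}"
  shows "hyp n i j c = hyp n k l a"
proof -
  have ij: "(i = k \<and> j = l) \<or> (i = l \<and> j = k)" using assms by (auto simp: sg_def split: if_splits)
  obtain x where "x \<in> hyp n k l a" "x \<in> hyp n i j c" using assms(7) by auto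
  then have "x k - x l = a" "x i - x j = c" by (auto simp: hyp_def)
  then show ?thesis using ij by (auto simp: hyp_def)
qed

theorem lemma3p1:
  fixes n k l :: nat and a :: real and A :: "(nat \<Rightarrow> real) set set"
  assumes "n \<ge> 2"
    and "nondeg_deformation n A"
    and "k < l" and "l < n"
    and "hyp n k l a \<in> A"
  shows "nondeg_deformation (n - 1)
           ((\<lambda>S. del_coord l ` S) ` restriction A (hyp n k l a))"
proof -
  define H0 where "H0 = hyp n k l a"
  have fin: "finite A" and A1: "\<forall>H\<in>A. \<exists>i j c. i < n \<and> j < n \<and> i \<noteq> j \<and> H = hyp n i j c"
    and A2: "\<forall>i j. i < n \<longrightarrow> j < n \<longrightarrow> i \<noteq> j \<longrightarrow> (\<exists>c. hyp n i j c \<in> A)"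
    using assms(2) unfolding nondeg_deformation_def by auto
  have "finite (restriction A H0)" using fin unfolding restriction_def by auto
  then have F: "finite ((\<lambda>S. del_coord l ` S) ` restriction A H0)" by simp
  have B1: "\<exists>i j c. i < n - 1 \<and> j < n - 1 \<and> i \<noteq> j \<and> G = hyp (n - 1) i j c"
    if G: "G \<in> (\<lambda>S. del_coord l ` S) ` restriction A H0" for G
  proof -
    obtain H where H: "H \<in> A" "H \<noteq> H0" "H0 \<inter> H \<noteq> {}" "G = del_coord l ` (H0 \<inter> H)"
      using G unfolding restriction_def by auto
    obtain i j c where ijc: "i < n" "j < n" "i \<noteq> j" "H = hyp n i j c" using A1 H(1) by blast
    have ne: "sg k l i \<noteq> sg k l j"
      using degen[OF assms(3,4) ijc(1-3)] H ijc(4) unfolding H0_def by auto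
    show ?thesis
      using keyA[OF assms(3,4) ijc(1,2) ne, of a c] H(4) ijc(4) ne
        sg_lt[OF assms(3,4) ijc(1)] sg_lt[OF assms(3,4) ijc(2)] unfolding H0_def by blast
  qed
  have B2: "\<exists>c. hyp (n - 1) i' j' c \<in> (\<lambda>S. del_coord l ` S) ` restriction A H0"
    if ij': "i' < n - 1" "j' < n - 1" "i' \<noteq> j'" for i' j'
  proof -
    define i where "i = (if i' < l then i' else Suc i')"
    define j where "j = (if j' < l then j' else Suc j')"
    have ii: "i < n" "j < n" "i \<noteq> j" using ij' assms(4) by (auto simp: i_def j_def)
    have si: "sg k l i = i'" "sg k l j = j'" by (auto simp: i_def j_def sg_def)
    obtain c where c: "hyp n i j c \<in> A" using A2 ii by blast
    define c' where "c' = c + (if i = l then a else 0) - (if j = l then a else 0)"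
    have eq: "del_coord l ` (H0 \<inter> hyp n i j c) = hyp (n - 1) i' j' c'"
      using keyA[OF assms(3,4) ii(1,2), of a c] si ij' unfolding H0_def c'_def by auto
    define y where "y = (\<lambda>m. if m = i' then c' else (0::real))"
    have "y \<in> hyp (n - 1) i' j' c'" using ij' by (auto simp: y_def hyp_def Rn_def)
    then have ne: "H0 \<inter> hyp n i j c \<noteq> {}" using eq by auto
    define z where "z = (\<lambda>m. if m = i' then c' + 1 else (0::real))"
    have zR: "z \<in> Rn (n - 1)" and zn: "z \<notin> hyp (n - 1) i' j' c'"
      using ij' by (auto simp: z_def hyp_def Rn_def)
    have "lft k l a z \<in> H0" using lft_in[OF assms(3,4) zR] unfolding H0_def .
    have neq: "hyp n i j c \<noteq> H0"
    proof
      assume "hyp n i j c = H0"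
      then have "del_coord l ` H0 = hyp (n - 1) i' j' c'" using eq by simp
      then show False using \<open>lft k l a z \<in> H0\<close> del_lft[OF assms(3)] zn by (metis image_eqI)
    qed
    have "H0 \<inter> hyp n i j c \<in> restriction A H0"
      unfolding restriction_def using c ne neq by blast
    then show ?thesis using eq by (metis image_eqI)
  qed
  show ?thesis unfolding nondeg_deformation_def H0_def[symmetric] using F B1 B2 by blast
qed

end
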